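(* Let $d\ge1$, let $a_{-d},\dots,a_d\in\mathbb{C}$ with $a_{-k}=\overline{a_k}$ and $a_d\ne0$, let $b=(b(n))_{n\in\mathbb{Z}}$ be a bounded real sequence, and let $L$ be the operator on $\ell^2(\mathbb{Z})$ given by $(Lu)(n)=\sum_{k=-d}^da_ku(n+k)+b(n)u(n)$. If $u,v\in\ell^2(\mathbb{Z})$ satisfy $Lu=Eu$ and $Lv=Ev$ for the same eigenvalue $E$, then the vectors $U=\begin{pmatrix}\vec u(1)\\\vec u(0)\end{pmatrix}$ and $V=\begin{pmatrix}\vec v(1)\\\vec v(0)\end{pmatrix}$ in $\mathbb{C}^{2d}$ are symplectically orthogonal with respect to $S$, i.e. $U^*SV=0$.
   Context: For a sequence $u$, $\vec u(n)=(u(nd+d-1),\dots,u(nd+1),u(nd))^T\in\mathbb{C}^d$. $C$ is the $d\times d$ upper triangular matrix with first row $(a_d,a_{d-1},\dots,a_1)$, i.e. $C_{ij}=a_{d-j+i}$ for $j\ge i$ and $0$ for $j<i$, and $S=\begin{pmatrix}0&-C^*\\C&0\end{pmatrix}$. *)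

theory Defs
  imports "HOL-Analysis.Analysis" "Jordan_Normal_Form.Schur_Decomposition"
begin

(* \vec u(n) = (u(nd+d-1), ..., u(nd+1), u(nd))^T in C^d  (0-indexed component i is u(nd+d-1-i)) *)
definition blockvec :: "(int \<Rightarrow> complex) \<Rightarrow> nat \<Rightarrow> int \<Rightarrow> complex vec" where
  "blockvec u d n = vec d (\<lambda>i. u (n * int d + int d - 1 - int i))"

definition Cmat :: "(int \<Rightarrow> complex) \<Rightarrow> nat \<Rightarrow> complex mat" where
  "Cmat a d = mat d d (\<lambda>(i, j). if i \<le> j then a (int d - int j + int i) else 0)"

definition Smat :: "(int \<Rightarrow> complex) \<Rightarrow> nat \<Rightarrow> complex mat" where
  "Smat a d = four_block_mat (0\<^sub>m d d) (- mat_adjoint (Cmat a d)) (Cmat a d) (0\<^sub>m d d)"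

definition Lop :: "(int \<Rightarrow> complex) \<Rightarrow> (int \<Rightarrow> real) \<Rightarrow> nat \<Rightarrow> (int \<Rightarrow> complex) \<Rightarrow> int \<Rightarrow> complex" where
  "Lop a b d u n = (\<Sum>k = - int d..int d. a k * u (n + k)) + complex_of_real (b n) * u n"

definition ell2 :: "(int \<Rightarrow> complex) \<Rightarrow> bool" where
  "ell2 u \<longleftrightarrow> (\<lambda>n. (cmod (u n))\<^sup>2) summable_on UNIV"

end

theory Submission
  imports Defs
begin

lemma conj_append: "conjugate (x @\<^sub>v y) = conjugate x @\<^sub>v (conjugate (y :: complex vec))"
  unfolding append_vec_def Let_def by (rule eq_vecI) auto

lemma zero_mult_vec: "w \<in> carrier_vec m \<Longrightarrow> (0\<^sub>m n m :: complex mat) *\<^sub>v w = 0\<^sub>v n"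
  by (rule eq_vecI) (auto simp: scalar_prod_def)

lemma adj_index: "i < dim_col A \<Longrightarrow> j < dim_row A \<Longrightarrow> mat_adjoint A $$ (i,j) = cnj (A $$ (j,i))"
  unfolding mat_adjoint_def by (simp add: mat_of_rows_def cols_def)

lemma adj_carrier: "A \<in> carrier_mat n m \<Longrightarrow> mat_adjoint A \<in> carrier_mat m n"
  unfolding mat_adjoint_def by (auto simp: mat_of_rows_def cols_def)

lemma vecpart:
  assumes conjh: "\<And>k. k \<in> {- int d..int d} \<Longrightarrow> a (- k) = cnj (a k)"
  shows "conjugate (blockvec u d 1 @\<^sub>v blockvec u d 0)
           \<bullet> (Smat a d *\<^sub>v (blockvec v d 1 @\<^sub>v blockvec v d 0)) =
   (\<Sum>i<d. \<Sum>j<d. if i \<le> j then cnj (u (int d - 1 - int i)) * a (int d - int j + int i) * v (2 * int d - 1 - int j)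
       - cnj (u (2 * int d - 1 - int j)) * a (- (int d - int j + int i)) * v (int d - 1 - int i) else 0)"
proof -
  have C: "Cmat a d \<in> carrier_mat d d" by (simp add: Cmat_def)
  have aC: "mat_adjoint (Cmat a d) \<in> carrier_mat d d" by (rule adj_carrier[OF C])
  have bv: "\<And>w n. blockvec w d n \<in> carrier_vec d" by (simp add: blockvec_def)
  have "Smat a d *\<^sub>v (blockvec v d 1 @\<^sub>v blockvec v d 0) =
     (0\<^sub>m d d *\<^sub>v blockvec v d 1 + (- mat_adjoint (Cmat a d)) *\<^sub>v blockvec v d 0) @\<^sub>v
     (Cmat a d *\<^sub>v blockvec v d 1 + 0\<^sub>m d d *\<^sub>v blockvec v d 0)"
    unfolding Smat_def
    by (rule four_block_mat_mult_vec) (use C aC bv in auto)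
  also have "\<dots> = ((- mat_adjoint (Cmat a d)) *\<^sub>v blockvec v d 0) @\<^sub>v (Cmat a d *\<^sub>v blockvec v d 1)"
    using C aC bv by (simp add: zero_mult_vec)
  finally have S: "Smat a d *\<^sub>v (blockvec v d 1 @\<^sub>v blockvec v d 0) = \<dots>" .
  have "conjugate (blockvec u d 1 @\<^sub>v blockvec u d 0) \<bullet> (Smat a d *\<^sub>v (blockvec v d 1 @\<^sub>v blockvec v d 0))
    = conjugate (blockvec u d 1) \<bullet> ((- mat_adjoint (Cmat a d)) *\<^sub>v blockvec v d 0)
      + conjugate (blockvec u d 0) \<bullet> (Cmat a d *\<^sub>v blockvec v d 1)" (is "?lhs = _")
    unfolding S conj_append
    by (rule scalar_prod_append[of _ d _ d]) (use C aC bv in auto)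
  also have "conjugate (blockvec u d 1) \<bullet> ((- mat_adjoint (Cmat a d)) *\<^sub>v blockvec v d 0)
     = (\<Sum>i<d. \<Sum>j<d. if i \<le> j then - cnj (u (2 * int d - 1 - int j)) * a (- (int d - int j + int i)) * v (int d - 1 - int i) else 0)" (is "_ = ?rhs1")
    using aC
    apply (subst sum.swap)
    apply (subgoal_tac "\<And>i j. j < d \<Longrightarrow> i \<le> j \<Longrightarrow> cnj (a (int i + int d - int j)) = a (int j - (int i + int d))")
    prefer 2 subgoal for i j using conjh[of "int i + int d - int j"] by (simp add: algebra_simps)
    apply (simp add: scalar_prod_def mult_mat_vec_def blockvec_def adj_index Cmat_def sum_distrib_left lessThan_atLeast0)
    apply (rule sum.cong, simp)
    apply (rule sum.cong, simp)
    apply (auto simp: conjh algebra_simps)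
    done
  also have "conjugate (blockvec u d 0) \<bullet> (Cmat a d *\<^sub>v blockvec v d 1)
     = (\<Sum>i<d. \<Sum>j<d. if i \<le> j then cnj (u (int d - 1 - int i)) * a (int d - int j + int i) * v (2 * int d - 1 - int j) else 0)" (is "_ = ?rhs2")
    apply (simp add: scalar_prod_def mult_mat_vec_def blockvec_def Cmat_def sum_distrib_left lessThan_atLeast0)
    apply (rule sum.cong, simp)
    apply (rule sum.cong, simp)
    apply (auto simp: algebra_simps)
    done
  finally have X: "?lhs = ?rhs1 + ?rhs2" .
  show ?thesis unfolding X sum.distrib[symmetric] by (intro sum.cong refl) simp
qed


lemma ell2_seq:
  assumes "ell2 x"
  shows "(\<lambda>N. x (int N)) \<longlonglongrightarrow> 0" "(\<lambda>N. x (- int N)) \<longlonglongrightarrow> 0"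
proof -
  have s: "(\<lambda>n. (cmod (x n))\<^sup>2) summable_on UNIV" using assms unfolding ell2_def .
  have g: "(\<lambda>N. x (h N)) \<longlonglongrightarrow> 0" if "inj h" for h :: "nat \<Rightarrow> int"
  proof -
    have "(\<lambda>n. (cmod (x n))\<^sup>2) summable_on (range h)"
      by (rule summable_on_subset_banach[OF s]) auto
    then have "((\<lambda>n. (cmod (x n))\<^sup>2) \<circ> h) summable_on UNIV"
      using summable_on_reindex[of h UNIV] that by auto
    then have "summable (\<lambda>N. (cmod (x (h N)))\<^sup>2)"
      by (simp add: summable_on_UNIV_nonneg_real_iff o_def)
    then have "(\<lambda>N. (cmod (x (h N)))\<^sup>2) \<longlonglongrightarrow> 0" by (rule summable_LIMSEQ_zero)
    then have "(\<lambda>N. sqrt ((cmod (x (h N)))\<^sup>2)) \<longlonglongrightarrow> sqrt 0" by (rule tendsto_real_sqrt)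
    then have "(\<lambda>N. norm (x (h N))) \<longlonglongrightarrow> 0" by simp
    then show ?thesis by (simp add: tendsto_norm_zero_iff)
  qed
  show "(\<lambda>N. x (int N)) \<longlonglongrightarrow> 0" by (rule g) (auto simp: inj_def)
  show "(\<lambda>N. x (- int N)) \<longlonglongrightarrow> 0" by (rule g) (auto simp: inj_def)
qed

lemma ell2_top:
  assumes "ell2 x"
  shows "(x \<longlongrightarrow> 0) at_top" "(x \<longlongrightarrow> 0) at_bot"
proof -
  have "(((\<lambda>N. x (int N)) \<circ> nat) \<longlongrightarrow> 0) at_top"
    using filterlim_compose[OF ell2_seq(1)[OF assms] filterlim_nat_sequentially] by (simp add: o_def)
  moreover have "eventually (\<lambda>m. ((\<lambda>N. x (int N)) \<circ> nat) m = x m) at_top"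
    using eventually_ge_at_top[of "0::int"] by eventually_elim simp
  ultimately show "(x \<longlongrightarrow> 0) at_top" using tendsto_cong by blast
  have f: "filterlim (\<lambda>m::int. nat (- m)) sequentially at_bot"
  proof -
    have "filterlim (\<lambda>m::int. - m) at_top at_bot"
      unfolding filterlim_at_top
    proof
      fix Z :: int show "\<forall>\<^sub>F m in at_bot. Z \<le> - m"
        by (rule eventually_mono[OF eventually_le_at_bot[of "- Z"]]) simp
    qed
    then show ?thesis using filterlim_compose[OF filterlim_nat_sequentially] by blast
  qed
  have "(((\<lambda>N. x (- int N)) \<circ> (\<lambda>m. nat (- m))) \<longlongrightarrow> 0) at_bot"
    using filterlim_compose[OF ell2_seq(2)[OF assms] f] by (simp add: o_def)
  moreover have "eventually (\<lambda>m. ((\<lambda>N. x (- int N)) \<circ> (\<lambda>m. nat (- m))) m = x m) at_bot"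
    using eventually_le_at_bot[of "0::int"] by eventually_elim simp
  ultimately show "(x \<longlongrightarrow> 0) at_bot" using tendsto_cong by blast
qed

lemma shift_top:
  fixes x :: "int \<Rightarrow> complex"
  assumes "(x \<longlongrightarrow> 0) at_top" "(x \<longlongrightarrow> 0) at_bot"
  shows "((\<lambda>m. x (m + c)) \<longlongrightarrow> 0) at_top" "((\<lambda>m. x (m + c)) \<longlongrightarrow> 0) at_bot"
proof -
  have "filterlim (\<lambda>m::int. m + c) at_top at_top"
    unfolding filterlim_at_top
  proof
    fix Z show "\<forall>\<^sub>F m in at_top. Z \<le> m + c"
      by (rule eventually_mono[OF eventually_ge_at_top[of "Z - c"]]) simp
  qed
  from filterlim_compose[OF assms(1) this] show "((\<lambda>m. x (m + c)) \<longlongrightarrow> 0) at_top" by simp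
  have "filterlim (\<lambda>m::int. m + c) at_bot at_bot"
    unfolding filterlim_at_bot
  proof
    fix Z show "\<forall>\<^sub>F m in at_bot. m + c \<le> Z"
      by (rule eventually_mono[OF eventually_le_at_bot[of "Z - c"]]) simp
  qed
  from filterlim_compose[OF assms(2) this] show "((\<lambda>m. x (m + c)) \<longlongrightarrow> 0) at_bot" by simp
qed

definition fterm :: "(int \<Rightarrow> complex) \<Rightarrow> (int \<Rightarrow> complex) \<Rightarrow> (int \<Rightarrow> complex) \<Rightarrow> nat \<Rightarrow> int \<Rightarrow> complex" where
  "fterm a x y k p = cnj (x p) * a (int k) * y (p + int k) - cnj (x (p + int k)) * a (- int k) * y p"

definition Wr :: "(int \<Rightarrow> complex) \<Rightarrow> nat \<Rightarrow> (int \<Rightarrow> complex) \<Rightarrow> (int \<Rightarrow> complex) \<Rightarrow> int \<Rightarrow> complex" where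
  "Wr a d x y m = (\<Sum>k\<in>{1..d}. \<Sum>j<k. fterm a x y k (m - 1 - int j))"

lemma Wr_lim:
  assumes "ell2 x" "ell2 y"
  shows "(Wr a d x y \<longlongrightarrow> 0) at_top" "(Wr a d x y \<longlongrightarrow> 0) at_bot"
proof -
  note X = ell2_top[OF assms(1)] and Y = ell2_top[OF assms(2)]
  have cX: "((\<lambda>m. cnj (z m)) \<longlongrightarrow> 0) F" if "(z \<longlongrightarrow> 0) F" for F and z :: "int \<Rightarrow> complex"
    using tendsto_cnj[OF that] by simp
  have l: "((\<lambda>m. fterm a x y k (m - 1 - int j)) \<longlongrightarrow> 0) F"
    if F: "F = at_top \<or> F = at_bot" for k j F
  proof -
    have sx: "((\<lambda>m. x (m + c)) \<longlongrightarrow> 0) F" for c using shift_top[OF X] F by blast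
    have sy: "((\<lambda>m. y (m + c)) \<longlongrightarrow> 0) F" for c using shift_top[OF Y] F by blast
    have e1: "((\<lambda>m. cnj (x (m + (- 1 - int j))) * a (int k) * y (m + (- 1 - int j + int k))) \<longlongrightarrow> 0) F"
      using tendsto_mult[OF tendsto_mult[OF cX[OF sx] tendsto_const] sy] by simp
    have e2: "((\<lambda>m. cnj (x (m + (- 1 - int j + int k))) * a (- int k) * y (m + (- 1 - int j))) \<longlongrightarrow> 0) F"
      using tendsto_mult[OF tendsto_mult[OF cX[OF sx] tendsto_const] sy] by simp
    have "((\<lambda>m. cnj (x (m + (- 1 - int j))) * a (int k) * y (m + (- 1 - int j + int k))
       - cnj (x (m + (- 1 - int j + int k))) * a (- int k) * y (m + (- 1 - int j))) \<longlongrightarrow> 0) F"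
      using tendsto_diff[OF e1 e2] by simp
    then show ?thesis unfolding fterm_def by (simp add: algebra_simps)
  qed
  have L: "((\<lambda>m. \<Sum>k\<in>{1..d}. \<Sum>j<k. fterm a x y k (m - 1 - int j)) \<longlongrightarrow> (\<Sum>k\<in>{1..d}. \<Sum>j<k. (0::complex))) F"
    if F: "F = at_top \<or> F = at_bot" for F
    by (intro tendsto_sum l[OF F])
  show "(Wr a d x y \<longlongrightarrow> 0) at_top" unfolding Wr_def using L[of at_top] by simp
  show "(Wr a d x y \<longlongrightarrow> 0) at_bot" unfolding Wr_def using L[of at_bot] by simp
qed


lemma sym_sum_split:
  fixes g :: "int \<Rightarrow> complex"
  shows "(\<Sum>k = - int d..int d. g k) = g 0 + (\<Sum>k\<in>{1..d}. g (int k) + g (- int k))"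
proof (induction d)
  case 0 then show ?case by simp
next
  case (Suc d)
  have e: "{- int (Suc d)..int (Suc d)} = insert (int d + 1) (insert (- (int d + 1)) {- int d..int d})"
    by auto
  have "(\<Sum>k = - int (Suc d)..int (Suc d). g k) = g (int d + 1) + g (- (int d + 1)) + (\<Sum>k = - int d..int d. g k)"
    unfolding e by (simp add: algebra_simps)
  then show ?case using Suc by (simp add: algebra_simps)
qed

lemma Wr_step:
  assumes conjh: "\<And>k. k \<in> {- int d..int d} \<Longrightarrow> a (- k) = cnj (a k)"
    and ex: "Lop a b d x m = E * x m" and ey: "Lop a b d y m = F * y m"
  shows "Wr a d x y (m + 1) - Wr a d x y m = (F - cnj E) * cnj (x m) * y m"
proof -
  define f where "f k p = fterm a x y k p" for k p
  have tel: "(\<Sum>j<k. f i (m - int j)) - (\<Sum>j<k. f i (m - 1 - int j)) = f i m - f i (m - int k)" for k i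
  proof (induction k)
    case 0 then show ?case by simp
  next
    case (Suc k)
    then show ?case by (simp add: algebra_simps)
  qed
  have "Wr a d x y (m + 1) - Wr a d x y m = (\<Sum>k\<in>{1..d}. (\<Sum>j<k. f k (m - int j)) - (\<Sum>j<k. f k (m - 1 - int j)))"
    unfolding Wr_def f_def sum_subtractf by simp
  also have "\<dots> = (\<Sum>k\<in>{1..d}. f k m - f k (m - int k))"
    using tel by simp
  also have "\<dots> = (\<Sum>k\<in>{1..d}. cnj (x m) * (a (int k) * y (m + int k) + a (- int k) * y (m + - int k))
      - y m * cnj (a (int k) * x (m + int k) + a (- int k) * x (m + - int k)))"
  proof (rule sum.cong[OF refl])
    fix k assume k: "k \<in> {1..d}"
    have c1: "cnj (a (int k)) = a (- int k)" using conjh[of "int k"] k by simp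
    have c2: "cnj (a (- int k)) = a (int k)" using conjh[of "int k"] k by simp
    show "f k m - f k (m - int k) = cnj (x m) * (a (int k) * y (m + int k) + a (- int k) * y (m + - int k))
      - y m * cnj (a (int k) * x (m + int k) + a (- int k) * x (m + - int k))"
      unfolding f_def fterm_def by (simp add: c1 c2 algebra_simps)
  qed
  also have "\<dots> = cnj (x m) * (\<Sum>k\<in>{1..d}. a (int k) * y (m + int k) + a (- int k) * y (m + - int k))
      - y m * cnj (\<Sum>k\<in>{1..d}. a (int k) * x (m + int k) + a (- int k) * x (m + - int k))"
    by (simp add: sum_subtractf sum_distrib_left cnj_sum distrib_left sum.distrib)
  also have "(\<Sum>k\<in>{1..d}. a (int k) * y (m + int k) + a (- int k) * y (m + - int k)) = F * y m - a 0 * y m - of_real (b m) * y m"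
    using ey sym_sum_split[of "\<lambda>k. a k * y (m + k)" d] unfolding Lop_def by (simp add: algebra_simps)
  also have "(\<Sum>k\<in>{1..d}. a (int k) * x (m + int k) + a (- int k) * x (m + - int k)) = E * x m - a 0 * x m - of_real (b m) * x m"
    using ex sym_sum_split[of "\<lambda>k. a k * x (m + k)" d] unfolding Lop_def by (simp add: algebra_simps)
  also have "cnj (a 0) = a 0" using conjh[of 0] by simp
  then have "cnj (x m) * (F * y m - a 0 * y m - of_real (b m) * y m) - y m * cnj (E * x m - a 0 * x m - of_real (b m) * x m)
     = (F - cnj E) * cnj (x m) * y m" by (simp add: algebra_simps)
  finally show ?thesis .
qed

lemma Wr_tel:
  assumes "\<And>m. Wr a d x y (m + 1) - Wr a d x y m = c * g m"
  shows "Wr a d x y (M + int n) - Wr a d x y M = c * (\<Sum>i<n. g (M + int i))"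
proof (induction n)
  case 0 then show ?case by simp
next
  case (Suc n)
  have "Wr a d x y (M + int (Suc n)) - Wr a d x y M
     = (Wr a d x y (M + int n + 1) - Wr a d x y (M + int n)) + (Wr a d x y (M + int n) - Wr a d x y M)"
    by (simp add: algebra_simps)
  also have "\<dots> = c * g (M + int n) + c * (\<Sum>i<n. g (M + int i))" using assms Suc by simp
  finally show ?case by (simp add: algebra_simps)
qed


lemma Wr_mat:
  "(\<Sum>i<d. \<Sum>j<d. if i \<le> j then cnj (u (int d - 1 - int i)) * a (int d - int j + int i) * v (2 * int d - 1 - int j)
       - cnj (u (2 * int d - 1 - int j)) * a (- (int d - int j + int i)) * v (int d - 1 - int i) else 0)
   = Wr a d u v (int d)"
proof -
  have "Wr a d u v (int d) = (\<Sum>k\<in>{1..d}. \<Sum>j\<in>{j \<in> {..<d}. j < k}. fterm a u v k (int d - 1 - int j))"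
    unfolding Wr_def by (intro sum.cong refl) (auto intro!: sum.cong)
  also have "\<dots> = (\<Sum>i<d. \<Sum>k | k \<in> {1..d} \<and> i < k. fterm a u v k (int d - 1 - int i))"
    by (rule sum.swap_restrict) auto
  also have "\<dots> = (\<Sum>i<d. \<Sum>j<d. if i \<le> j then cnj (u (int d - 1 - int i)) * a (int d - int j + int i) * v (2 * int d - 1 - int j)
       - cnj (u (2 * int d - 1 - int j)) * a (- (int d - int j + int i)) * v (int d - 1 - int i) else 0)"
  proof (rule sum.cong[OF refl])
    fix i assume i: "i \<in> {..<d}"
    have "(\<Sum>j<d. if i \<le> j then cnj (u (int d - 1 - int i)) * a (int d - int j + int i) * v (2 * int d - 1 - int j)
       - cnj (u (2 * int d - 1 - int j)) * a (- (int d - int j + int i)) * v (int d - 1 - int i) else 0)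
      = (\<Sum>j\<in>{j \<in> {..<d}. i \<le> j}. cnj (u (int d - 1 - int i)) * a (int d - int j + int i) * v (2 * int d - 1 - int j)
       - cnj (u (2 * int d - 1 - int j)) * a (- (int d - int j + int i)) * v (int d - 1 - int i))"
      by (rule sum.inter_filter[symmetric]) simp
    also have "\<dots> = (\<Sum>k | k \<in> {1..d} \<and> i < k. fterm a u v k (int d - 1 - int i))"
    proof (rule sum.reindex_bij_witness[where i = "\<lambda>k. d - k + i" and j = "\<lambda>j. d - j + i"])
      fix k assume "k \<in> {k. k \<in> {1..d} \<and> i < k}"
      then show "d - (d - k + i) + i = k" "d - k + i \<in> {j \<in> {..<d}. i \<le> j}" by auto
    next
      fix j assume j: "j \<in> {j \<in> {..<d}. i \<le> j}"
      then show "d - (d - j + i) + i = j" "d - j + i \<in> {k. k \<in> {1..d} \<and> i < k}" by auto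
      have e1: "int (d - j + i) = int d - int j + int i" using j by auto
      show "fterm a u v (d - j + i) (int d - 1 - int i) = cnj (u (int d - 1 - int i)) * a (int d - int j + int i) * v (2 * int d - 1 - int j)
       - cnj (u (2 * int d - 1 - int j)) * a (- (int d - int j + int i)) * v (int d - 1 - int i)"
        unfolding fterm_def e1 by (simp add: algebra_simps)
    qed
    finally show "(\<Sum>k | k \<in> {1..d} \<and> i < k. fterm a u v k (int d - 1 - int i)) = (\<Sum>j<d. if i \<le> j then cnj (u (int d - 1 - int i)) * a (int d - int j + int i) * v (2 * int d - 1 - int j)
       - cnj (u (2 * int d - 1 - int j)) * a (- (int d - int j + int i)) * v (int d - 1 - int i) else 0)" by simp
  qed
  finally show ?thesis by simp
qed

theorem lemma5p1:
  fixes d :: nat and a :: "int \<Rightarrow> complex" and b :: "int \<Rightarrow> real"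
    and u v :: "int \<Rightarrow> complex" and E :: complex
  assumes "d \<ge> 1"
    and "\<And>k. k \<in> {- int d..int d} \<Longrightarrow> a (- k) = cnj (a k)"
    and "a (int d) \<noteq> 0"
    and "bounded (range b)"
    and "ell2 u" and "ell2 v"
    and "\<And>n. Lop a b d u n = E * u n"
    and "\<And>n. Lop a b d v n = E * v n"
  shows "conjugate (blockvec u d 1 @\<^sub>v blockvec u d 0)
           \<bullet> (Smat a d *\<^sub>v (blockvec v d 1 @\<^sub>v blockvec v d 0)) = 0"
proof -
  note conjh = assms(2)
  have goal: "conjugate (blockvec u d 1 @\<^sub>v blockvec u d 0)
           \<bullet> (Smat a d *\<^sub>v (blockvec v d 1 @\<^sub>v blockvec v d 0)) = Wr a d u v (int d)"
    by (rule trans[OF vecpart[where d=d and a=a and u=u and v=v, OF conjh] Wr_mat[where d=d and a=a and u=u and v=v]])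
  have stepuv: "Wr a d u v (m + 1) - Wr a d u v m = (E - cnj E) * (cnj (u m) * v m)" for m
    using Wr_step[OF conjh assms(7)[of m] assms(8)[of m]] by (simp only: mult.assoc)
  have teluv: "Wr a d u v (M + int n) - Wr a d u v M = (E - cnj E) * (\<Sum>i<n. cnj (u (M + int i)) * v (M + int i))" for M n
    by (rule Wr_tel[OF stepuv])
  show ?thesis
  proof (cases "E = cnj E")
    case True
    have z: "E - cnj E = 0" by (simp only: True[symmetric] diff_self)
    have const: "Wr a d u v (M + int n) = Wr a d u v M" for M n using teluv[of M n] z by simp
    have allc: "Wr a d u v m = Wr a d u v (int d)" for m
    proof (cases "m \<le> int d")
      case True then show ?thesis using const[of m "nat (int d - m)"] by simp
    next
      case False then show ?thesis using const[of "int d" "nat (m - int d)"] by simp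
    qed
    define c where "c = Wr a d u v (int d)"
    have Wc: "Wr a d u v = (\<lambda>m. c)" unfolding c_def by (rule ext, rule allc)
    have "(Wr a d u v \<longlongrightarrow> 0) at_top" by (rule Wr_lim(1)[OF assms(5,6)])
    then have "((\<lambda>m::int. c) \<longlongrightarrow> 0) at_top" by (simp only: Wc)
    then have "c = 0" by (simp add: tendsto_const_iff)
    then have "Wr a d u v (int d) = 0" using c_def by simp
    then show ?thesis using goal by simp
  next
    case False
    have stepuu: "Wr a d u u (m + 1) - Wr a d u u m = (E - cnj E) * (of_real ((cmod (u m))\<^sup>2))" for m
    proof -
      have "cnj (u m) * u m = of_real ((cmod (u m))\<^sup>2)" using complex_norm_square[of "u m"]
        by (simp add: mult.commute)
      then show ?thesis using Wr_step[OF conjh assms(7)[of m] assms(7)[of m]] by (simp only: mult.assoc)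
    qed
    have teluu: "Wr a d u u (M + int n) - Wr a d u u M = (E - cnj E) * (\<Sum>i<n. of_real ((cmod (u (M + int i)))\<^sup>2))" for M n
      by (rule Wr_tel[OF stepuu])
    define S where "S N = (\<Sum>i<2 * N. (cmod (u (- int N + int i)))\<^sup>2)" for N
    have WS: "Wr a d u u (int N) - Wr a d u u (- int N) = (E - cnj E) * of_real (S N)" for N
      using teluu[of "- int N" "2 * N"] unfolding S_def by simp
    have l1: "(\<lambda>N. Wr a d u u (int N)) \<longlonglongrightarrow> 0"
      using filterlim_compose[OF Wr_lim(1)[OF assms(5,5)] filterlim_int_sequentially] by (simp add: o_def)
    have fb: "filterlim (\<lambda>N::nat. - int N) at_bot sequentially"
      unfolding filterlim_at_bot
    proof
      fix Z :: int show "\<forall>\<^sub>F N in sequentially. - int N \<le> Z"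
        by (rule eventually_mono[OF eventually_ge_at_top[of "nat (- Z)"]]) simp
    qed
    have l2: "(\<lambda>N. Wr a d u u (- int N)) \<longlonglongrightarrow> 0"
      using filterlim_compose[OF Wr_lim(2)[OF assms(5,5)] fb] by (simp add: o_def)
    have "(\<lambda>N. (E - cnj E) * of_real (S N)) \<longlonglongrightarrow> 0"
      using tendsto_diff[OF l1 l2] unfolding WS by simp
    then have "(\<lambda>N. inverse (E - cnj E) * ((E - cnj E) * of_real (S N))) \<longlonglongrightarrow> inverse (E - cnj E) * 0"
      by (intro tendsto_mult tendsto_const)
    moreover have "inverse (E - cnj E) * ((E - cnj E) * of_real (S N)) = complex_of_real (S N)" for N
    proof -
      have nz: "E - cnj E \<noteq> 0" using False by simp
      show ?thesis by (simp only: mult.assoc[symmetric] left_inverse[OF nz] mult_1_left)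
    qed
    ultimately have "(\<lambda>N. complex_of_real (S N)) \<longlonglongrightarrow> 0" by simp
    then have "(\<lambda>N. complex_of_real (S N)) \<longlonglongrightarrow> complex_of_real 0" by simp
    then have Sl: "S \<longlonglongrightarrow> 0" by (simp only: tendsto_of_real_iff)
    have u0: "u m = 0" for m
    proof -
      have "(cmod (u m))\<^sup>2 \<le> S N" if N: "N \<ge> nat \<bar>m\<bar> + 1" for N
      proof -
        define i where "i = nat (m + int N)"
        have i: "i < 2 * N" "- int N + int i = m" using N unfolding i_def by linarith+
        have "(cmod (u (- int N + int i)))\<^sup>2 \<le> S N"
          unfolding S_def by (rule member_le_sum) (use i in auto)
        then show ?thesis using i by simp
      qed
      then have "\<exists>N0. \<forall>N\<ge>N0. (cmod (u m))\<^sup>2 \<le> S N" by blast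
      then have "(cmod (u m))\<^sup>2 \<le> 0"
        by (rule LIMSEQ_le_const[OF Sl])
      then show ?thesis by simp
    qed
    have "Wr a d u v (int d) = 0" unfolding Wr_def fterm_def by (simp add: u0)
    then show ?thesis using goal by simp
  qed
qed

end
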